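(* Let $E\subseteq\mathbb R^2$ be a bounded domain. For every $U\subseteq E$ satisfying $|U|\ge|E|(1-\frac{A(E)}4)$ we have $A(U)\ge\frac{A(E)}4$.
   Context: For a bounded set $E\subseteq\mathbb R^2$ of positive measure, the Fraenkel asymmetry is $A(E)=\inf\{|E\triangle(x_0+rB)|/|E|: x_0\in\mathbb R^2,\ \pi r^2=|E|\}\in[0,1]$, where $B$ is the unit disk and $\triangle$ denotes symmetric difference. *)

theory Defs
  imports "HOL-Analysis.Analysis"
begin

abbreviation area :: "(real^2) set \<Rightarrow> real" where
  "area E \<equiv> measure lebesgue E"

definition fraenkel_asymmetry :: "(real^2) set \<Rightarrow> real" where
  "fraenkel_asymmetry E =
     Inf {area ((E - ((\<lambda>y. x0 + r *\<^sub>R y) ` ball 0 1)) \<union> (((\<lambda>y. x0 + r *\<^sub>R y) ` ball 0 1) - E)) / area E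
          | x0 r. r > 0 \<and> pi * r\<^sup>2 = area E}"

end

theory Submission
  imports Defs
begin
lemma ball_img: "r > 0 \<Longrightarrow> (\<lambda>y. x0 + r *\<^sub>R y) ` ball (0::real^2) 1 = ball x0 r"
proof -
  assume r: "r > 0"
  have "(\<lambda>y. x0 + r *\<^sub>R y) ` ball (0::real^2) 1 = (+) x0 ` ((\<lambda>y. r *\<^sub>R y) ` ball 0 1)"
    by (simp add: image_image)
  also have "\<dots> = ball x0 r" proof -
    have "(\<lambda>y. r *\<^sub>R y) ` ball (0::real^2) 1 = ball 0 r" using r by (subst ball_scale) auto
    moreover have "(+) x0 ` ball (0::real^2) r = ball x0 r" by (simp only: image_add_ball add_0)
    ultimately show ?thesis by simp
  qed
  finally show ?thesis .
qed
lemma area_ball: "r \<ge> 0 \<Longrightarrow> area (ball (x0::real^2) r) = r^2 * pi"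
  by (metis circle_area measure_completion sets_lborel borel_open open_ball)

lemma symdiff_le:
  assumes "X \<in> lmeasurable" "Y \<in> lmeasurable"
  shows "area ((X - Y) \<union> (Y - X)) \<le> 2 * area X + (area Y - area X)"
proof -
  have "area ((X - Y) \<union> (Y - X)) \<le> area (X \<union> Y)"
    using assms by (intro measure_mono_fmeasurable) auto
  also have "\<dots> \<le> area X + area Y" using assms by (intro measure_Un_le) auto
  finally show ?thesis by simp
qed

lemma lin_aux: "(c::real) = aE - t/4 \<Longrightarrow> X \<le> 2*(aE-aU)+W \<Longrightarrow> c \<le> aU \<Longrightarrow> t \<le> X \<Longrightarrow> t/2 \<le> W"
  by argo

theorem lemma4p4:
  fixes E U :: "(real^2) set"
  assumes "open E" and "connected E" and "E \<noteq> {}" and "bounded E"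
    and "U \<subseteq> E" and "U \<in> sets lebesgue"
    and "area U \<ge> area E * (1 - fraenkel_asymmetry E / 4)"
  shows "fraenkel_asymmetry U \<ge> fraenkel_asymmetry E / 4"
proof -
  define aE where "aE = area E"
  define aU where "aU = area U"
  define Aq where "Aq = fraenkel_asymmetry E"
  have Em: "E \<in> lmeasurable" using assms by (simp add: lmeasurable_open)
  have Um: "U \<in> lmeasurable" using assms bounded_subset
    by (metis bounded_set_imp_lmeasurable)
  obtain x e where "e > 0" "ball x e \<subseteq> E" using assms
    by (metis all_not_in_conv open_contains_ball)
  hence "area (ball x e) \<le> aE" unfolding aE_def using Em
    by (intro measure_mono_fmeasurable) auto
  moreover have "e^2 * pi > 0" using \<open>e > 0\<close> by simp
  ultimately have aEpos: "aE > 0" using \<open>e > 0\<close> area_ball[of e x] by linarith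
  have aUle: "aU \<le> aE" unfolding aU_def aE_def using assms Em
    by (intro measure_mono_fmeasurable) auto
  define r where "r = sqrt (aE / pi)"
  have rpos: "r > 0" unfolding r_def using aEpos by simp
  have pir: "pi * r^2 = aE" unfolding r_def using aEpos by simp
  define SE where "SE = {area ((E - ((\<lambda>y. x0 + r *\<^sub>R y) ` ball 0 1)) \<union> (((\<lambda>y. x0 + r *\<^sub>R y) ` ball 0 1) - E)) / area E
          | x0 r. r > 0 \<and> pi * r\<^sup>2 = area E}"
  have Aq_def': "Aq = Inf SE" unfolding Aq_def SE_def fraenkel_asymmetry_def ..
  have bdd: "bdd_below SE" unfolding SE_def by (rule bdd_belowI[of _ 0]) auto
  have inSE: "area ((E - ball x0 r) \<union> (ball x0 r - E)) / aE \<in> SE" for x0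
    unfolding SE_def mem_Collect_eq
    by (rule exI[of _ x0], rule exI[of _ r]) (simp add: ball_img[OF rpos] rpos pir aE_def)
  have lowE: "Aq \<le> area ((E - ball x0 r) \<union> (ball x0 r - E)) / aE" for x0
    unfolding Aq_def' using bdd inSE by (rule cInf_lower[rotated])
  have Aqnn: "Aq \<ge> 0" unfolding Aq_def' using inSE
    by (intro cInf_greatest) (auto simp: SE_def)
  have "area ((E - ball 0 r) \<union> (ball 0 r - E)) \<le> 2 * aE + (area (ball (0::real^2) r) - aE)"
    unfolding aE_def using Em by (intro symdiff_le) auto
  also have "area (ball (0::real^2) r) = aE" using area_ball[of r 0] rpos pir by (simp add: mult.commute)
  finally have "area ((E - ball 0 r) \<union> (ball 0 r - E)) / aE \<le> 2" using aEpos by (simp add: pos_divide_le_eq)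
  hence "Aq \<le> 2" using lowE[of 0] by linarith
  have aUge: "aU \<ge> aE * (1 - Aq / 4)" using assms(7) unfolding aU_def aE_def Aq_def .
  have "aE * (1/2) \<le> aE * (1 - Aq / 4)" using \<open>Aq \<le> 2\<close> aEpos by (intro mult_left_mono) auto
  hence aUpos: "aU > 0" using aUge aEpos by linarith
  show ?thesis
    unfolding Aq_def[symmetric] fraenkel_asymmetry_def[of U] aU_def[symmetric]
  proof (rule cInf_greatest)
    define s where "s = sqrt (aU / pi)"
    have "s > 0" "pi * s^2 = aU" unfolding s_def using aUpos by auto
    thus "{area ((U - ((\<lambda>y. x0 + r *\<^sub>R y) ` ball 0 1)) \<union> (((\<lambda>y. x0 + r *\<^sub>R y) ` ball 0 1) - U)) / aU
          | x0 r. r > 0 \<and> pi * r\<^sup>2 = aU} \<noteq> {}" by blast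
  next
    fix v assume "v \<in> {area ((U - ((\<lambda>y. x0 + r *\<^sub>R y) ` ball 0 1)) \<union> (((\<lambda>y. x0 + r *\<^sub>R y) ` ball 0 1) - U)) / aU
          | x0 r. r > 0 \<and> pi * r\<^sup>2 = aU}"
    then obtain x0 s where s: "s > 0" "pi * s^2 = aU"
      and v: "v = area ((U - ball x0 s) \<union> (ball x0 s - U)) / aU"
      using ball_img by auto
    have "pi * s^2 \<le> pi * r^2" using s pir aUle by simp
    hence "s^2 \<le> r^2" by (simp add: mult_le_cancel_left_pos)
    hence "s \<le> r" using power2_le_imp_le[OF _ less_imp_le[OF rpos]] by blast
    hence sub: "ball x0 s \<subseteq> ball x0 r" by auto
    let ?B = "ball x0 r" and ?B' = "ball x0 s"
    have Es: "E \<in> sets lebesgue" and Us: "U \<in> sets lebesgue" using Em Um fmeasurableD by auto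
    have Bs: "?B \<in> sets lebesgue" "?B' \<in> sets lebesgue" by (auto intro: fmeasurableD)
    have incl: "(E - ?B) \<union> (?B - E) \<subseteq> (E - U) \<union> ((U - ?B') \<union> (?B' - U)) \<union> (?B - ?B')"
      using sub assms(5) by auto
    have m1: "area ((E - ?B) \<union> (?B - E)) \<le> area ((E - U) \<union> ((U - ?B') \<union> (?B' - U)) \<union> (?B - ?B'))"
    proof (rule measure_mono_fmeasurable[OF incl])
      show "(E - ?B) \<union> (?B - E) \<in> sets lebesgue" using Es Bs by (intro sets.Un sets.Diff) auto
      have "(E - U) \<union> ((U - ?B') \<union> (?B' - U)) \<union> (?B - ?B') \<subseteq> E \<union> ?B" using sub assms(5) by auto
      moreover have "bounded (E \<union> ?B)" using assms(4) by auto
      ultimately have "bounded ((E - U) \<union> ((U - ?B') \<union> (?B' - U)) \<union> (?B - ?B'))" using bounded_subset by blast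
      moreover have "(E - U) \<union> ((U - ?B') \<union> (?B' - U)) \<union> (?B - ?B') \<in> sets lebesgue" using Es Us Bs by (intro sets.Un sets.Diff) auto
      ultimately show "(E - U) \<union> ((U - ?B') \<union> (?B' - U)) \<union> (?B - ?B') \<in> lmeasurable"
        by (rule bounded_set_imp_lmeasurable)
    qed
    also have "\<dots> \<le> area (E - U) + area ((U - ?B') \<union> (?B' - U)) + area (?B - ?B')"
    proof -
      have a: "area ((E - U) \<union> ((U - ?B') \<union> (?B' - U)) \<union> (?B - ?B')) \<le> area ((E - U) \<union> ((U - ?B') \<union> (?B' - U))) + area (?B - ?B')"
        using Es Us Bs by (intro measure_Un_le sets.Un sets.Diff) auto
      have b: "area ((E - U) \<union> ((U - ?B') \<union> (?B' - U))) \<le> area (E - U) + area ((U - ?B') \<union> (?B' - U))"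
        using Es Us Bs by (intro measure_Un_le sets.Un sets.Diff) auto
      show ?thesis using a b by linarith
    qed
    also have "area (E - U) = aE - aU" unfolding aE_def aU_def
      using Em Us assms(5) by (intro measurable_measure_Diff) auto
    also have "area (?B - ?B') = area ?B - area ?B'"
      using sub Bs by (intro measurable_measure_Diff) auto
    also have "area ?B = aE" using area_ball[of r x0] rpos pir by (simp add: mult.commute)
    also have "area ?B' = aU" using area_ball[of s x0] s by (simp add: mult.commute)
    finally have key: "area ((E - ?B) \<union> (?B - E)) \<le> 2 * (aE - aU) + area ((U - ?B') \<union> (?B' - U))" by simp
    have "Aq * aE \<le> area ((E - ?B) \<union> (?B - E))" using lowE[of x0] aEpos
      by (simp add: pos_le_divide_eq)
    hence W: "area ((U - ?B') \<union> (?B' - U)) \<ge> Aq * aE / 2"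
    proof -
      have "aE * (1 - Aq / 4) = aE - Aq * aE / 4" by (simp add: algebra_simps)
      thus ?thesis using lin_aux[OF _ key aUge \<open>Aq * aE \<le> _\<close>] by simp
    qed
    have "Aq / 4 * aU \<le> Aq / 4 * aE" using Aqnn aUle by (intro mult_left_mono) auto
    moreover have "Aq * aE \<ge> 0" using Aqnn aEpos by simp
    ultimately have "Aq / 4 * aU \<le> Aq * aE / 2" by linarith
    thus "Aq / 4 \<le> v" unfolding v using W aUpos by (simp add: pos_le_divide_eq)
  qed
qed
end
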